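(* Let $\Omega\subseteq\mathbb{R}^n$ be open, $U\in\mathcal{G}_c(\Omega)$, and let $\Gamma$ be a closed cone contained in the complement of $\Sigma_g(U)$. Let $u$ be a compactly supported representative of $U$. Then there exists $N$ such that for every $p\in\mathbb{N}_0$ there exists $M\in\mathbb{N}_0$ such that for every $\phi\in\mathcal{A}_M(\mathbb{R}^n)$ there exist $c>0$ and $\varepsilon_0>0$ with $$|\mathcal{F}(u(\phi_\varepsilon,\cdot))(\xi)|\le c\,\varepsilon^{-N}(1+|\xi|)^{-p}\qquad(\xi\in\Gamma,\ 0<\varepsilon<\varepsilon_0).$$
   Context: $\mathcal{A}_0(\mathbb{R})$ is the set of test functions on $\mathbb{R}$ with integral $1$; for $q\ge1$, $\mathcal{A}_q(\mathbb{R})$ consists of those $\phi\in\mathcal{A}_0(\mathbb{R})$ with $\int x^j\phi(x)\,dx=0$ for $1\le j\le q$; $\mathcal{A}_q(\mathbb{R}^n)$ is the set of tensor products $\phi\otimes\cdots\otimes\phi$ ($n$ factors) with $\phi\in\mathcal{A}_q(\mathbb{R})$. For $\phi\in\mathcal{D}(\mathbb{R}^n)$, $\phi_\varepsilon(x)=\varepsilon^{-n}\phi(x/\varepsilon)$. $\mathcal{E}_M(\Omega)$ is the set of maps $R:\mathcal{A}_0(\mathbb{R}^n)\times\Omega\to\mathbb{C}$, smooth in $x$, such that for all compact $K\subset\Omega$ and all $\alpha$ there is $N$ such that for all $\phi\in\mathcal{A}_N$ there are $c,\eta>0$ with $\sup_{x\in K}|\partial^\alpha R(\phi_\varepsilon,x)|\le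 c\varepsilon^{-N}$ for $0<\varepsilon<\eta$. $\mathcal{N}(\Omega)$ is the set of $R\in\mathcal{E}_M(\Omega)$ such that for all $K,\alpha$ and all $q\in\mathbb{N}$ there is $p$ such that for all $\phi\in\mathcal{A}_p$ there are $c,\eta>0$ with $\sup_{x\in K}|\partial^\alpha R(\phi_\varepsilon,x)|\le c\varepsilon^{q}$ for $0<\varepsilon<\eta$. The Colombeau algebra is $\mathcal{G}(\Omega)=\mathcal{E}_M(\Omega)/\mathcal{N}(\Omega)$; $\mathcal{G}_c(\Omega)$ is the subalgebra of compactly supported elements, which have representatives $u$ with $u(\phi,\cdot)$ supported in a fixed compact set. For $U\in\mathcal{G}_c$ with such a representative $u$, $\Sigma_g(U)\subseteq\mathbb{R}^n\setminus0$ is the complement of the set of $\xi_0\ne0$ possessing an open conic neighborhood $\Gamma_0$ such that: there is $N$ such that for all $p\in\mathbb{N}_0$ there is $M$ such that for all $\phi\in\mathcal{A}_M$ there are $c,\eta>0$ with $|\mathcal{F}(u(\phi_\varepsilon,\cdot))(\xi)|\le c\varepsilon^{-N}(1+|\xi|)^{-p}$ for $\xi\in\Gamma_0$, $0<\varepsilon<\eta$ (this is independent of the choice of representative). $\mathcal{F}$ denotes the Fourier transform. *)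

theory Defs
  imports "HOL-Analysis.Analysis"
begin

fun vder :: "nat \<Rightarrow> (real \<Rightarrow> complex) \<Rightarrow> real \<Rightarrow> complex" where
  "vder 0 f = f"
| "vder (Suc k) f = (\<lambda>x. vector_derivative (vder k f) (at x))"

definition test_fun1 :: "(real \<Rightarrow> complex) \<Rightarrow> bool" where
  "test_fun1 \<phi> \<longleftrightarrow> (\<forall>k x. vder k \<phi> differentiable (at x))
      \<and> (\<exists>K. compact K \<and> (\<forall>x. x \<notin> K \<longrightarrow> \<phi> x = 0))"

definition A1 :: "nat \<Rightarrow> (real \<Rightarrow> complex) set" where
  "A1 q = {\<phi>. test_fun1 \<phi> \<and> integral UNIV \<phi> = 1
      \<and> (\<forall>j. 1 \<le> j \<and> j \<le> q \<longrightarrow> integral UNIV (\<lambda>x. (x ^ j) *\<^sub>R \<phi> x) = 0)}"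

definition An :: "nat \<Rightarrow> (real ^ 'n \<Rightarrow> complex) set" where
  "An q = {\<lambda>x. \<Prod>i\<in>UNIV. \<phi> (x $ i) | \<phi>. \<phi> \<in> A1 q}"

definition scale :: "real \<Rightarrow> (real ^ 'n \<Rightarrow> complex) \<Rightarrow> real ^ 'n \<Rightarrow> complex" where
  "scale \<epsilon> \<phi> = (\<lambda>x. complex_of_real (\<epsilon> powr (- real CARD('n))) * \<phi> ((1/\<epsilon>) *\<^sub>R x))"

definition pdir :: "'n \<Rightarrow> (real ^ 'n \<Rightarrow> complex) \<Rightarrow> real ^ 'n \<Rightarrow> complex" where
  "pdir i f = (\<lambda>x. vector_derivative (\<lambda>t. f (x + t *\<^sub>R axis i 1)) (at 0))"

text \<open>Iterated partial derivative along a list of coordinate directions; a multi-index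
  alpha corresponds to any list containing each direction i exactly alpha(i) times.\<close>
fun pd :: "'n list \<Rightarrow> (real ^ 'n \<Rightarrow> complex) \<Rightarrow> real ^ 'n \<Rightarrow> complex" where
  "pd [] f = f"
| "pd (i # is) f = pdir i (pd is f)"

definition smooth_on_n :: "(real ^ 'n) set \<Rightarrow> (real ^ 'n \<Rightarrow> complex) \<Rightarrow> bool" where
  "smooth_on_n \<Omega> f \<longleftrightarrow> (\<forall>is. continuous_on \<Omega> (pd is f)
      \<and> (\<forall>x\<in>\<Omega>. \<forall>i. (\<lambda>t. pd is f (x + t *\<^sub>R axis i 1)) differentiable (at 0)))"

type_synonym 'n rep = "(real ^ 'n \<Rightarrow> complex) \<Rightarrow> real ^ 'n \<Rightarrow> complex"

definition EM :: "(real ^ 'n) set \<Rightarrow> 'n rep set" where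
  "EM \<Omega> = {R. (\<forall>\<phi>\<in>An 0. smooth_on_n \<Omega> (R \<phi>))
     \<and> (\<forall>K \<alpha>. compact K \<and> K \<subseteq> \<Omega> \<longrightarrow> (\<exists>N::nat. \<forall>\<phi>\<in>An N. \<exists>c>0. \<exists>\<eta>>0.
          \<forall>\<epsilon>. 0 < \<epsilon> \<and> \<epsilon> < \<eta> \<longrightarrow> (\<forall>x\<in>K. cmod (pd \<alpha> (R (scale \<epsilon> \<phi>)) x) \<le> c * \<epsilon> powr (- real N))))}"

definition comp_supp_rep :: "(real ^ 'n) set \<Rightarrow> 'n rep \<Rightarrow> bool" where
  "comp_supp_rep \<Omega> u \<longleftrightarrow> (\<exists>K. compact K \<and> K \<subseteq> \<Omega> \<and> (\<forall>\<phi>. \<forall>x\<in>\<Omega>. x \<notin> K \<longrightarrow> u \<phi> x = 0))"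

text \<open>Fourier transform of a function on Omega (extended by zero outside Omega).\<close>
definition fourier :: "(real ^ 'n) set \<Rightarrow> (real ^ 'n \<Rightarrow> complex) \<Rightarrow> real ^ 'n \<Rightarrow> complex" where
  "fourier \<Omega> f \<xi> = integral \<Omega> (\<lambda>x. f x * cis (- (x \<bullet> \<xi>)))"

definition open_conic_nbhd :: "(real ^ 'n) set \<Rightarrow> real ^ 'n \<Rightarrow> bool" where
  "open_conic_nbhd \<Gamma>0 \<xi>0 \<longleftrightarrow> open \<Gamma>0 \<and> \<xi>0 \<in> \<Gamma>0 \<and> 0 \<notin> \<Gamma>0
      \<and> (\<forall>\<xi>\<in>\<Gamma>0. \<forall>t>0. t *\<^sub>R \<xi> \<in> \<Gamma>0)"

definition decay_on :: "(real ^ 'n) set \<Rightarrow> 'n rep \<Rightarrow> (real ^ 'n) set \<Rightarrow> bool" where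
  "decay_on \<Omega> u \<Gamma> \<longleftrightarrow> (\<exists>N::nat. \<forall>p::nat. \<exists>M::nat. \<forall>\<phi>\<in>An M. \<exists>c>0. \<exists>\<eta>>0.
      \<forall>\<epsilon> \<xi>. 0 < \<epsilon> \<and> \<epsilon> < \<eta> \<and> \<xi> \<in> \<Gamma> \<longrightarrow>
        cmod (fourier \<Omega> (u (scale \<epsilon> \<phi>)) \<xi>) \<le> c * \<epsilon> powr (- real N) * (1 + norm \<xi>) powr (- real p))"

text \<open>Generalized wave front set (frequency part) Sigma_g(U), computed from a
  compactly supported representative u of U.\<close>
definition sigma_g :: "(real ^ 'n) set \<Rightarrow> 'n rep \<Rightarrow> (real ^ 'n) set" where
  "sigma_g \<Omega> u = {\<xi>0. \<xi>0 \<noteq> 0 \<and> \<not> (\<exists>\<Gamma>0. open_conic_nbhd \<Gamma>0 \<xi>0 \<and> decay_on \<Omega> u \<Gamma>0)}"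

end

theory Submission
  imports Defs
begin

lemma An_mono:
  assumes "M' \<le> M"
  shows "An M \<subseteq> (An M' :: (real ^ 'n \<Rightarrow> complex) set)"
  using assms unfolding An_def A1_def by fastforce

lemma bound_mono:
  fixes \<epsilon> c c1 w :: real
  assumes "0 < \<epsilon>" "\<epsilon> \<le> 1" "N1 \<le> N" "c1 \<le> c" "0 \<le> w" "0 \<le> c1"
  shows "c1 * \<epsilon> powr (- real N1) * w \<le> c * \<epsilon> powr (- real N) * w"
proof -
  have "\<epsilon> powr (- real N1) \<le> \<epsilon> powr (- real N)"
    using assms by (intro powr_mono') auto
  then have "c1 * \<epsilon> powr (- real N1) \<le> c * \<epsilon> powr (- real N)"
    using assms by (intro mult_mono) auto
  then show ?thesis using assms by (intro mult_right_mono) auto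
qed

lemma decay_on_empty: "decay_on \<Omega> u {}"
  unfolding decay_on_def by (auto intro: exI[of _ 1])

lemma decay_on_subset: "decay_on \<Omega> u A \<Longrightarrow> B \<subseteq> A \<Longrightarrow> decay_on \<Omega> u B"
  unfolding decay_on_def by (meson subsetD)

lemma decay_on_Un:
  fixes u :: "'n::finite rep"
  assumes A: "decay_on \<Omega> u A" and B: "decay_on \<Omega> u B"
  shows "decay_on \<Omega> u (A \<union> B)"
proof -
  obtain N1 where N1: "\<forall>p::nat. \<exists>M::nat. \<forall>\<phi>\<in>An M. \<exists>c>0. \<exists>\<eta>>0.
      \<forall>\<epsilon> \<xi>. 0 < \<epsilon> \<and> \<epsilon> < \<eta> \<and> \<xi> \<in> A \<longrightarrow>
        cmod (fourier \<Omega> (u (scale \<epsilon> \<phi>)) \<xi>) \<le> c * \<epsilon> powr (- real N1) * (1 + norm \<xi>) powr (- real p)"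
    using A unfolding decay_on_def by blast
  obtain N2 where N2: "\<forall>p::nat. \<exists>M::nat. \<forall>\<phi>\<in>An M. \<exists>c>0. \<exists>\<eta>>0.
      \<forall>\<epsilon> \<xi>. 0 < \<epsilon> \<and> \<epsilon> < \<eta> \<and> \<xi> \<in> B \<longrightarrow>
        cmod (fourier \<Omega> (u (scale \<epsilon> \<phi>)) \<xi>) \<le> c * \<epsilon> powr (- real N2) * (1 + norm \<xi>) powr (- real p)"
    using B unfolding decay_on_def by blast
  show ?thesis unfolding decay_on_def
  proof (rule exI[of _ "max N1 N2"], intro allI)
    fix p :: nat
    obtain M1 where M1: "\<forall>\<phi>\<in>An M1. \<exists>c>0. \<exists>\<eta>>0.
      \<forall>\<epsilon> \<xi>. 0 < \<epsilon> \<and> \<epsilon> < \<eta> \<and> \<xi> \<in> A \<longrightarrow>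
        cmod (fourier \<Omega> (u (scale \<epsilon> \<phi>)) \<xi>) \<le> c * \<epsilon> powr (- real N1) * (1 + norm \<xi>) powr (- real p)"
      using N1 by blast
    obtain M2 where M2: "\<forall>\<phi>\<in>An M2. \<exists>c>0. \<exists>\<eta>>0.
      \<forall>\<epsilon> \<xi>. 0 < \<epsilon> \<and> \<epsilon> < \<eta> \<and> \<xi> \<in> B \<longrightarrow>
        cmod (fourier \<Omega> (u (scale \<epsilon> \<phi>)) \<xi>) \<le> c * \<epsilon> powr (- real N2) * (1 + norm \<xi>) powr (- real p)"
      using N2 by blast
    show "\<exists>M::nat. \<forall>\<phi>\<in>An M. \<exists>c>0. \<exists>\<eta>>0.
      \<forall>\<epsilon> \<xi>. 0 < \<epsilon> \<and> \<epsilon> < \<eta> \<and> \<xi> \<in> A \<union> B \<longrightarrow>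
        cmod (fourier \<Omega> (u (scale \<epsilon> \<phi>)) \<xi>) \<le> c * \<epsilon> powr (- real (max N1 N2)) * (1 + norm \<xi>) powr (- real p)"
    proof (rule exI[of _ "max M1 M2"], intro ballI)
      fix \<phi> :: "real ^ 'n::finite \<Rightarrow> complex"
      assume \<phi>: "\<phi> \<in> An (max M1 M2)"
      have "\<phi> \<in> An M1" using \<phi> An_mono[of M1 "max M1 M2"] by (meson max.cobounded1 subsetD)
      then obtain c1 \<eta>1 where c1: "c1 > 0" "\<eta>1 > 0"
        and b1: "\<forall>\<epsilon> \<xi>. 0 < \<epsilon> \<and> \<epsilon> < \<eta>1 \<and> \<xi> \<in> A \<longrightarrow>
        cmod (fourier \<Omega> (u (scale \<epsilon> \<phi>)) \<xi>) \<le> c1 * \<epsilon> powr (- real N1) * (1 + norm \<xi>) powr (- real p)"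
        using M1 by blast
      have "\<phi> \<in> An M2" using \<phi> An_mono[of M2 "max M1 M2"] by (meson max.cobounded2 subsetD)
      then obtain c2 \<eta>2 where c2: "c2 > 0" "\<eta>2 > 0"
        and b2: "\<forall>\<epsilon> \<xi>. 0 < \<epsilon> \<and> \<epsilon> < \<eta>2 \<and> \<xi> \<in> B \<longrightarrow>
        cmod (fourier \<Omega> (u (scale \<epsilon> \<phi>)) \<xi>) \<le> c2 * \<epsilon> powr (- real N2) * (1 + norm \<xi>) powr (- real p)"
        using M2 by blast
      have "\<forall>\<epsilon> \<xi>. 0 < \<epsilon> \<and> \<epsilon> < min 1 (min \<eta>1 \<eta>2) \<and> \<xi> \<in> A \<union> B \<longrightarrow>
        cmod (fourier \<Omega> (u (scale \<epsilon> \<phi>)) \<xi>) \<le> max c1 c2 * \<epsilon> powr (- real (max N1 N2)) * (1 + norm \<xi>) powr (- real p)"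
      proof (intro allI impI)
        fix \<epsilon> \<xi>
        assume h: "0 < \<epsilon> \<and> \<epsilon> < min 1 (min \<eta>1 \<eta>2) \<and> \<xi> \<in> A \<union> B"
        have w: "0 \<le> (1 + norm \<xi>) powr (- real p)" by simp
        show "cmod (fourier \<Omega> (u (scale \<epsilon> \<phi>)) \<xi>) \<le> max c1 c2 * \<epsilon> powr (- real (max N1 N2)) * (1 + norm \<xi>) powr (- real p)"
        proof (cases "\<xi> \<in> A")
          case True
          then have "cmod (fourier \<Omega> (u (scale \<epsilon> \<phi>)) \<xi>) \<le> c1 * \<epsilon> powr (- real N1) * (1 + norm \<xi>) powr (- real p)"
            using b1 h by auto
          also have "\<dots> \<le> max c1 c2 * \<epsilon> powr (- real (max N1 N2)) * (1 + norm \<xi>) powr (- real p)"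
            using h c1 w by (intro bound_mono) auto
          finally show ?thesis .
        next
          case False
          then have "cmod (fourier \<Omega> (u (scale \<epsilon> \<phi>)) \<xi>) \<le> c2 * \<epsilon> powr (- real N2) * (1 + norm \<xi>) powr (- real p)"
            using b2 h by auto
          also have "\<dots> \<le> max c1 c2 * \<epsilon> powr (- real (max N1 N2)) * (1 + norm \<xi>) powr (- real p)"
            using h c2 w by (intro bound_mono) auto
          finally show ?thesis .
        qed
      qed
      moreover have "0 < max c1 c2" using c1 by simp
      moreover have "0 < min 1 (min \<eta>1 \<eta>2)" using c1 c2 by simp
      ultimately show "\<exists>c>0. \<exists>\<eta>>0.
      \<forall>\<epsilon> \<xi>. 0 < \<epsilon> \<and> \<epsilon> < \<eta> \<and> \<xi> \<in> A \<union> B \<longrightarrow>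
        cmod (fourier \<Omega> (u (scale \<epsilon> \<phi>)) \<xi>) \<le> c * \<epsilon> powr (- real (max N1 N2)) * (1 + norm \<xi>) powr (- real p)"
        by blast
    qed
  qed
qed

lemma decay_on_Union:
  assumes "finite F" "\<forall>G\<in>F. decay_on \<Omega> u G"
  shows "decay_on \<Omega> u (\<Union>F)"
  using assms by (induction F rule: finite_induct) (auto simp: decay_on_empty decay_on_Un)

lemma int_bound:
  fixes f :: "real ^ 'n::finite \<Rightarrow> complex"
  assumes K: "compact K" "K \<subseteq> \<Omega>" and z: "\<forall>x\<in>\<Omega>. x \<notin> K \<longrightarrow> f x = 0"
    and b: "\<forall>x\<in>K. cmod (f x) \<le> C" and C: "0 \<le> C"
  shows "cmod (integral \<Omega> f) \<le> C * measure lebesgue K"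
proof -
  have "integral \<Omega> f = integral UNIV (\<lambda>x. if x \<in> \<Omega> then f x else 0)"
    by (simp add: integral_restrict_UNIV)
  also have "(\<lambda>x. if x \<in> \<Omega> then f x else 0) = (\<lambda>x. if x \<in> K then f x else 0)"
    using K z by (intro ext) auto
  also have "integral UNIV \<dots> = integral K f"
    by (simp add: integral_restrict_UNIV)
  finally have eq: "integral \<Omega> f = integral K f" .
  have Kl: "K \<in> lmeasurable" using K by (simp add: lmeasurable_compact)
  have m0: "0 \<le> C * measure lebesgue K" using C by simp
  show ?thesis
  proof (cases "f integrable_on K")
    case True
    have "cmod (integral K f) \<le> integral K (\<lambda>x. C)"
      using True integrable_on_const[OF Kl] b by (intro integral_norm_bound_integral) auto
    also have "integral K (\<lambda>x. C) = C * measure lebesgue K"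
      using lmeasure_integral[OF Kl] integral_cmul[of K C "\<lambda>x. 1::real"] by simp
    finally show ?thesis using eq by simp
  next
    case False
    then show ?thesis using eq m0 by (simp add: not_integrable_integral)
  qed
qed

lemma decay_on_zero:
  fixes u :: "'n::finite rep"
  assumes EM: "u \<in> EM \<Omega>" and cs: "comp_supp_rep \<Omega> u"
  shows "decay_on \<Omega> u {0}"
proof -
  obtain K where K: "compact K" "K \<subseteq> \<Omega>" and z: "\<forall>\<phi>. \<forall>x\<in>\<Omega>. x \<notin> K \<longrightarrow> u \<phi> x = 0"
    using cs unfolding comp_supp_rep_def by blast
  obtain N0 :: nat where N0: "\<forall>\<phi>\<in>An N0. \<exists>c>0. \<exists>\<eta>>0.
          \<forall>\<epsilon>. 0 < \<epsilon> \<and> \<epsilon> < \<eta> \<longrightarrow> (\<forall>x\<in>K. cmod (pd [] (u (scale \<epsilon> \<phi>)) x) \<le> c * \<epsilon> powr (- real N0))"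
    using EM K unfolding EM_def by blast
  show ?thesis unfolding decay_on_def
  proof (rule exI[of _ N0], intro allI, rule exI[of _ N0], intro ballI)
    fix p :: nat and \<phi> :: "real ^ 'n \<Rightarrow> complex"
    assume "\<phi> \<in> An N0"
    then obtain c \<eta> where c: "c > 0" "\<eta> > 0" and b: "\<forall>\<epsilon>. 0 < \<epsilon> \<and> \<epsilon> < \<eta> \<longrightarrow>
       (\<forall>x\<in>K. cmod (u (scale \<epsilon> \<phi>) x) \<le> c * \<epsilon> powr (- real N0))"
      using N0 by auto
    have "\<forall>\<epsilon> \<xi>. 0 < \<epsilon> \<and> \<epsilon> < \<eta> \<and> \<xi> \<in> {0} \<longrightarrow>
        cmod (fourier \<Omega> (u (scale \<epsilon> \<phi>)) \<xi>) \<le> (c * (measure lebesgue K + 1)) * \<epsilon> powr (- real N0) * (1 + norm \<xi>) powr (- real p)"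
    proof (intro allI impI)
      fix \<epsilon> and \<xi> :: "real ^ 'n"
      assume h: "0 < \<epsilon> \<and> \<epsilon> < \<eta> \<and> \<xi> \<in> {0}"
      then have \<xi>: "\<xi> = 0" by simp
      have f0: "fourier \<Omega> (u (scale \<epsilon> \<phi>)) \<xi> = integral \<Omega> (u (scale \<epsilon> \<phi>))"
        unfolding fourier_def \<xi> by simp
      have "cmod (integral \<Omega> (u (scale \<epsilon> \<phi>))) \<le> (c * \<epsilon> powr (- real N0)) * measure lebesgue K"
        using h c b z K by (intro int_bound) auto
      also have "\<dots> \<le> (c * (measure lebesgue K + 1)) * \<epsilon> powr (- real N0)"
        using c h by (simp add: algebra_simps)
      finally show "cmod (fourier \<Omega> (u (scale \<epsilon> \<phi>)) \<xi>) \<le> (c * (measure lebesgue K + 1)) * \<epsilon> powr (- real N0) * (1 + norm \<xi>) powr (- real p)"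
        using f0 \<xi> by simp
    qed
    moreover have "c * (measure lebesgue K + 1) > 0" using c by (simp add: add_nonneg_pos)
    ultimately show "\<exists>c>0. \<exists>\<eta>>0. \<forall>\<epsilon> \<xi>. 0 < \<epsilon> \<and> \<epsilon> < \<eta> \<and> \<xi> \<in> {0} \<longrightarrow>
        cmod (fourier \<Omega> (u (scale \<epsilon> \<phi>)) \<xi>) \<le> c * \<epsilon> powr (- real N0) * (1 + norm \<xi>) powr (- real p)"
      using c by blast
  qed
qed

theorem mainTheorem2:
  fixes \<Omega> :: "(real ^ 'n) set" and u :: "'n rep" and \<Gamma> :: "(real ^ 'n) set"
  assumes "open \<Omega>"
    and "u \<in> EM \<Omega>"
    and "comp_supp_rep \<Omega> u"
    and "closed \<Gamma>" and "cone \<Gamma>"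
    and "\<Gamma> \<subseteq> - sigma_g \<Omega> u"
  shows "\<exists>N::nat. \<forall>p::nat. \<exists>M::nat. \<forall>\<phi>\<in>An M. \<exists>c>0. \<exists>\<epsilon>0>0.
      \<forall>\<epsilon> \<xi>. 0 < \<epsilon> \<and> \<epsilon> < \<epsilon>0 \<and> \<xi> \<in> \<Gamma> \<longrightarrow>
        cmod (fourier \<Omega> (u (scale \<epsilon> \<phi>)) \<xi>) \<le> c * \<epsilon> powr (- real N) * (1 + norm \<xi>) powr (- real p)"
proof -
  define T where "T = {G. open G \<and> decay_on \<Omega> u G \<and> (\<forall>\<xi>\<in>G. \<forall>t>0. t *\<^sub>R \<xi> \<in> G)}"
  have cpt: "compact (sphere (0::real ^ 'n) 1 \<inter> \<Gamma>)"
    using assms(4) by (intro compact_Int_closed) auto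
  have cov: "sphere 0 1 \<inter> \<Gamma> \<subseteq> \<Union>T"
  proof
    fix \<xi> assume x: "\<xi> \<in> sphere 0 1 \<inter> \<Gamma>"
    then have "\<xi> \<noteq> 0" "\<xi> \<notin> sigma_g \<Omega> u" using assms(6) by auto
    then obtain G where "open_conic_nbhd G \<xi>" "decay_on \<Omega> u G"
      unfolding sigma_g_def by auto
    then show "\<xi> \<in> \<Union>T" unfolding T_def open_conic_nbhd_def by auto
  qed
  obtain T' where T': "T' \<subseteq> T" "finite T'" "sphere 0 1 \<inter> \<Gamma> \<subseteq> \<Union>T'"
    using compactE[OF cpt cov] unfolding T_def by blast
  have d1: "decay_on \<Omega> u (\<Union>T')"
    using T' by (intro decay_on_Union) (auto simp: T_def)
  have d2: "decay_on \<Omega> u ({0} \<union> \<Union>T')"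
    using decay_on_Un[OF decay_on_zero[OF assms(2,3)] d1] .
  have sub: "\<Gamma> \<subseteq> {0} \<union> \<Union>T'"
  proof
    fix \<xi> assume x: "\<xi> \<in> \<Gamma>"
    show "\<xi> \<in> {0} \<union> \<Union>T'"
    proof (cases "\<xi> = 0")
      case False
      define \<eta> where "\<eta> = (1 / norm \<xi>) *\<^sub>R \<xi>"
      have "\<eta> \<in> \<Gamma>" using assms(5) x unfolding cone_def \<eta>_def by simp
      moreover have "norm \<eta> = 1" using False unfolding \<eta>_def by simp
      ultimately obtain G where G: "G \<in> T'" "\<eta> \<in> G" using T' by auto
      then have "norm \<xi> *\<^sub>R \<eta> \<in> G" using T' False unfolding T_def by auto
      moreover have "norm \<xi> *\<^sub>R \<eta> = \<xi>" using False unfolding \<eta>_def by simp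
      ultimately show ?thesis using G by auto
    qed simp
  qed
  have "decay_on \<Omega> u \<Gamma>" using decay_on_subset[OF d2 sub] .
  then show ?thesis unfolding decay_on_def .
qed

end
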